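(* Let $G=(V,E)$ be a finite simple graph and let $\mathcal{X}=(X_i)_{i=1}^n$ be a sequence of subsets of $V$. Then $\mathcal{X}$ is a measurement schedule on the graph state $|G\rangle$ if and only if $\mathcal{X}$ is a path decomposition of $G$.
   Context: The graph state of $G$ is $|G\rangle=\left(\prod_{e\in E} CZ_e\right)|+\rangle^{\otimes V}$, with one qubit per vertex. A measurement schedule on $|G\rangle$ is a process of initialising and measuring the qubits (vertices), represented by the sequence $(X_i)_{i=1}^n$ where $X_i\subseteq V$ is the set of qubits that are active (initialised but not yet measured) at step $i$. It must satisfy: (M1) each qubit is initialised exactly once (so every $v\in V$ lies in some $X_i$, and the set of steps at which $v$ is active is a single contiguous block of indices, after which $v$ is measured and never active again); (M2) a qubit is measured only after all of its neighbouring qubits have been initialised (i.e. if $j$ is the last index with $v\in X_j$, then every neighbour $u$ of $v$ lies in some $X_i$ with $i\le j$). A path decomposition of $G$ is a sequence $(X_i)_{i=1}^n$ of subsets of $V$ such that: (P1) every $v\in V$ lies in some $X_i$; (P2) for every edge $e\in E$ there is an $i$ with $e\subseteq X_i$; (P3) for all $i\le j\le k$, if $v\in X_i\cap X_k$ then $v\in X_j$. *)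

theory Defs
  imports Main
begin

definition simple_graph :: "'a set \<Rightarrow> 'a set set \<Rightarrow> bool" where
  "simple_graph V E \<longleftrightarrow> finite V \<and> (\<forall>e\<in>E. e \<subseteq> V \<and> card e = 2)"

text \<open>Measurement schedule (X_i), i = 1..n, on the graph state of G = (V,E).
  (M1) every qubit is active at some step, and its active steps form a contiguous block;
  (M2) at the last step j at which v is active, every neighbour u of v has been
  initialised, i.e. lies in some X_i with i <= j.\<close>
definition measurement_schedule :: "'a set \<Rightarrow> 'a set set \<Rightarrow> nat \<Rightarrow> (nat \<Rightarrow> 'a set) \<Rightarrow> bool" where
  "measurement_schedule V E n X \<longleftrightarrow>
     (\<forall>v\<in>V. \<exists>i\<in>{1..n}. v \<in> X i) \<and>
     (\<forall>v\<in>V. \<forall>i j k. 1 \<le> i \<and> i \<le> j \<and> j \<le> k \<and> k \<le> n \<and> v \<in> X i \<and> v \<in> X k \<longrightarrow> v \<in> X j) \<and>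
     (\<forall>v\<in>V. \<forall>j\<in>{1..n}. v \<in> X j \<and> (\<forall>k\<in>{j<..n}. v \<notin> X k) \<longrightarrow>
        (\<forall>u. {u, v} \<in> E \<longrightarrow> (\<exists>i\<in>{1..j}. u \<in> X i)))"

text \<open>Path decomposition (X_i), i = 1..n, of G = (V,E): (P1), (P2), (P3).\<close>
definition path_decomposition :: "'a set \<Rightarrow> 'a set set \<Rightarrow> nat \<Rightarrow> (nat \<Rightarrow> 'a set) \<Rightarrow> bool" where
  "path_decomposition V E n X \<longleftrightarrow>
     (\<forall>v\<in>V. \<exists>i\<in>{1..n}. v \<in> X i) \<and>
     (\<forall>e\<in>E. \<exists>i\<in>{1..n}. e \<subseteq> X i) \<and>
     (\<forall>i j k v. 1 \<le> i \<and> i \<le> j \<and> j \<le> k \<and> k \<le> n \<and> v \<in> X i \<and> v \<in> X k \<longrightarrow> v \<in> X j)"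

end

theory Submission
  imports Defs
begin

lemma last_idx:
  fixes n :: nat
  assumes "\<exists>i\<in>{1..n}. v \<in> X i"
  shows "\<exists>j\<in>{1..n}. v \<in> X j \<and> (\<forall>k\<in>{j<..n}. v \<notin> X k)"
proof -
  let ?S = "{k\<in>{1..n}. v \<in> X k}"
  have f: "finite ?S" by (rule finite_subset[of _ "{1..n}"]) auto
  have ne: "?S \<noteq> {}" using assms by auto
  have m: "Max ?S \<in> ?S" using Max_in[OF f ne] .
  moreover have "\<forall>k\<in>{Max ?S<..n}. v \<notin> X k"
  proof
    fix k assume k: "k \<in> {Max ?S<..n}"
    have "1 \<le> k" using m k by auto
    show "v \<notin> X k"
    proof
      assume "v \<in> X k"
      then have "k \<in> ?S" using \<open>1 \<le> k\<close> k by auto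
      then have "k \<le> Max ?S" using Max_ge[OF f] by blast
      then show False using k by auto
    qed
  qed
  ultimately show ?thesis by blast
qed

lemma edge_aux:
  assumes M: "measurement_schedule V E n X"
    and uV: "u \<in> V" and vV: "v \<in> V" and e: "{u,v} \<in> E"
    and jv: "jv \<in> {1..n}" "v \<in> X jv" "\<forall>k\<in>{jv<..n}. v \<notin> X k"
    and ju: "ju \<in> {1..n}" "u \<in> X ju"
    and le: "jv \<le> ju"
  shows "{u,v} \<subseteq> X jv"
proof -
  from M jv vV e obtain i where i: "i \<in> {1..jv}" "u \<in> X i"
    unfolding measurement_schedule_def by blast
  have "u \<in> X jv" using M uV i ju jv le unfolding measurement_schedule_def
    by (smt (verit) atLeastAtMost_iff le_trans)
  then show ?thesis using jv by auto
qed

theorem theorem1: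
  fixes V :: "'a set" and E :: "'a set set" and n :: nat and X :: "nat \<Rightarrow> 'a set"
  assumes "simple_graph V E"
    and "\<forall>i\<in>{1..n}. X i \<subseteq> V"
  shows "measurement_schedule V E n X \<longleftrightarrow> path_decomposition V E n X"
proof
  assume M: "measurement_schedule V E n X"
  have P2: "\<forall>e\<in>E. \<exists>i\<in>{1..n}. e \<subseteq> X i"
  proof
    fix e assume eE: "e \<in> E"
    then have "e \<subseteq> V" "card e = 2" using assms(1) unfolding simple_graph_def by auto
    then obtain u v where uv: "e = {u,v}" "u \<noteq> v" "u \<in> V" "v \<in> V"
      by (metis card_2_iff insert_subset)
    obtain ju where ju: "ju \<in> {1..n}" "u \<in> X ju" "\<forall>k\<in>{ju<..n}. u \<notin> X k"
      using last_idx[of n u X] M uv unfolding measurement_schedule_def by blast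
    obtain jv where jv: "jv \<in> {1..n}" "v \<in> X jv" "\<forall>k\<in>{jv<..n}. v \<notin> X k"
      using last_idx[of n v X] M uv unfolding measurement_schedule_def by blast
    show "\<exists>i\<in>{1..n}. e \<subseteq> X i"
    proof (cases "jv \<le> ju")
      case True
      then show ?thesis using edge_aux[OF M uv(3,4) _ jv ju(1,2)] eE uv jv by blast
    next
      case False
      have e2: "{v,u} \<in> E" using eE uv by (simp add: insert_commute)
      show ?thesis using edge_aux[OF M uv(4,3) e2 ju jv(1,2)] False uv ju
        by (auto simp: insert_commute)
    qed
  qed
  have P3: "\<forall>i j k v. 1 \<le> i \<and> i \<le> j \<and> j \<le> k \<and> k \<le> n \<and> v \<in> X i \<and> v \<in> X k \<longrightarrow> v \<in> X j"
  proof (intro allI impI)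
    fix i j k v assume h: "1 \<le> i \<and> i \<le> j \<and> j \<le> k \<and> k \<le> n \<and> v \<in> X i \<and> v \<in> X k"
    then have "v \<in> V" using assms(2) by auto
    then show "v \<in> X j" using M h unfolding measurement_schedule_def by blast
  qed
  show "path_decomposition V E n X" using M P2 P3
    unfolding measurement_schedule_def path_decomposition_def by blast
next
  assume P: "path_decomposition V E n X"
  have M3: "\<forall>v\<in>V. \<forall>j\<in>{1..n}. v \<in> X j \<and> (\<forall>k\<in>{j<..n}. v \<notin> X k) \<longrightarrow>
        (\<forall>u. {u, v} \<in> E \<longrightarrow> (\<exists>i\<in>{1..j}. u \<in> X i))"
  proof (intro ballI impI allI)
    fix v j u assume j: "j \<in> {1..n}" and h: "v \<in> X j \<and> (\<forall>k\<in>{j<..n}. v \<notin> X k)"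
      and e: "{u,v} \<in> E"
    obtain i where i: "i \<in> {1..n}" "{u,v} \<subseteq> X i" using P e unfolding path_decomposition_def by blast
    have "v \<in> X i" using i by auto
    then have "i \<le> j" using h i by (meson atLeastAtMost_iff greaterThanAtMost_iff not_le)
    then show "\<exists>i\<in>{1..j}. u \<in> X i" using i by auto
  qed
  show "measurement_schedule V E n X" using P M3
    unfolding measurement_schedule_def path_decomposition_def by blast
qed

end
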